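(* Consider an arbitrary sequence of instances $\{\mathcal{I}_N\}$ of the binary voting game and an arbitrary sequence of strategy profiles $\{\Sigma_N\}_{N\ge1}$ ($\Sigma_N$ a profile in $\mathcal{I}_N$), and let $f^N$ be the excess expected vote share of $\Sigma_N$. (i) If $\liminf_{N\to\infty}\sqrt N f^N=+\infty$, then $\lim_{N\to\infty}A(\Sigma_N)=1$. (ii) If $\liminf_{N\to\infty}\sqrt N f^N<0$ (including $-\infty$), then $A(\Sigma_N)$ does not converge to $1$. (iii) If $0\le\liminf_{N\to\infty}\sqrt N f^N<+\infty$ and there is a constant $\psi>0$ such that $\mathrm{Var}\big(\sum_{n=1}^N X_n^N\mid W=w\big)\ge\psi N$ for every $N$ and every state $w\in\{L,H\}$, then $A(\Sigma_N)$ does not converge to $1$.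
   Context: Binary voting game. An instance has $N$ agents each voting for $\mathbf{A}$ or $\mathbf{R}$. Unobserved world state $W\in\{L,H\}$ with common prior $P_L,P_H>0$. Conditional on $W$, each agent independently receives a signal $S_n\in\{l,h\}$ with $P_{sw}=\Pr[S_n=s\mid W=w]$, $P_{hH}>P_{hL}$, $P_{lH}<P_{lL}$. With threshold $\mu\in(0,1)$, $\mathbf{A}$ wins iff at least $\mu N$ agents vote $\mathbf{A}$, else $\mathbf{R}$ wins. Agent $n$ has utility $v_n:\{L,H\}\times\{\mathbf{A},\mathbf{R}\}\to\{0,\dots,B\}$ with $v_n(H,\mathbf{A})>v_n(L,\mathbf{A})$, $v_n(H,\mathbf{R})<v_n(L,\mathbf{R})$; agents are friendly, unfriendly or contingent, with counts $\lfloor\alpha_F N\rfloor$, $\lfloor\alpha_U N\rfloor$ and the rest, for fixed $\alpha_F,\alpha_U,\alpha_C\ge0$ summing to 1, $\alpha_F<\mu$, $\alpha_U<1-\mu$; the informed majority decision is $\mathbf{A}$ in $H$ and $\mathbf{R}$ in $L$. A sequence of instances $\{\mathcal{I}_N\}$: $\mathcal{I}_N$ has $N$ agents; all share $\mu$, prior, signal distribution, $\alpha$'s; utilities arbitrary. Strategy $\sigma=(\beta_l,\beta_h)$, $\beta_s$ = probability of voting $\mathbf{A}$ on signal $s$; profile $\Sigma=(\sigma_1,\dots,\sigma_N)$. Fidelity $A(\Sigma)=P_L\lambda^{\mathbf{R}}_L(\Sigma)+P_H\lambda^{\mathbf{A}}_H(\Sigma)$, where $\lambda^{\mathbf{X}}_w(\Sigma)$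 is the ex-ante probability that $\mathbf{X}$ wins in state $w$. For the profile $\Sigma_N$, let $X_n^N=1$ if agent $n$ votes $\mathbf{A}$ and $0$ otherwise. Excess expected vote share: $f^N_H=\frac1N\sum_{n=1}^N E[X_n^N\mid W=H]-\mu$, $f^N_L=\frac1N\sum_{n=1}^N E[1-X_n^N\mid W=L]-(1-\mu)$, and $f^N=\min(f^N_H,f^N_L)$. *)

theory Defs
  imports "HOL-Probability.Probability"
begin

datatype world = L | H

text \<open>A strategy is a pair (beta_l, beta_h) of probabilities of voting A after
 signal l resp. h. Ph w = Pr[S = h | W = w], so Pr[S = l | W = w] = 1 - Ph w.
 Votes are encoded as booleans: True = vote A.\<close>

definition vote_pmf :: "(world \<Rightarrow> real) \<Rightarrow> world \<Rightarrow> real \<times> real \<Rightarrow> bool pmf" where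
  "vote_pmf Ph w \<sigma> = bind_pmf (bernoulli_pmf (Ph w))
      (\<lambda>s. bernoulli_pmf (if s then snd \<sigma> else fst \<sigma>))"

definition profile_pmf :: "(world \<Rightarrow> real) \<Rightarrow> world \<Rightarrow> nat \<Rightarrow> (nat \<Rightarrow> real \<times> real) \<Rightarrow> (nat \<Rightarrow> bool) pmf" where
  "profile_pmf Ph w N \<Sigma> = Pi_pmf {..<N} False (\<lambda>n. vote_pmf Ph w (\<Sigma> n))"

definition votesA :: "nat \<Rightarrow> (nat \<Rightarrow> bool) \<Rightarrow> nat" where
  "votesA N x = card {n \<in> {..<N}. x n}"

definition lamA :: "(world \<Rightarrow> real) \<Rightarrow> real \<Rightarrow> world \<Rightarrow> nat \<Rightarrow> (nat \<Rightarrow> real \<times> real) \<Rightarrow> real" where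
  "lamA Ph \<mu> w N \<Sigma> = measure_pmf.prob (profile_pmf Ph w N \<Sigma>) {x. real (votesA N x) \<ge> \<mu> * real N}"

definition lamR :: "(world \<Rightarrow> real) \<Rightarrow> real \<Rightarrow> world \<Rightarrow> nat \<Rightarrow> (nat \<Rightarrow> real \<times> real) \<Rightarrow> real" where
  "lamR Ph \<mu> w N \<Sigma> = measure_pmf.prob (profile_pmf Ph w N \<Sigma>) {x. real (votesA N x) < \<mu> * real N}"

definition fidelity :: "(world \<Rightarrow> real) \<Rightarrow> (world \<Rightarrow> real) \<Rightarrow> real \<Rightarrow> nat \<Rightarrow> (nat \<Rightarrow> real \<times> real) \<Rightarrow> real" where
  "fidelity prior Ph \<mu> N \<Sigma> = prior L * lamR Ph \<mu> L N \<Sigma> + prior H * lamA Ph \<mu> H N \<Sigma>"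

definition excess_H :: "(world \<Rightarrow> real) \<Rightarrow> real \<Rightarrow> nat \<Rightarrow> (nat \<Rightarrow> real \<times> real) \<Rightarrow> real" where
  "excess_H Ph \<mu> N \<Sigma> = (\<Sum>n<N. measure_pmf.prob (vote_pmf Ph H (\<Sigma> n)) {True}) / real N - \<mu>"

definition excess_L :: "(world \<Rightarrow> real) \<Rightarrow> real \<Rightarrow> nat \<Rightarrow> (nat \<Rightarrow> real \<times> real) \<Rightarrow> real" where
  "excess_L Ph \<mu> N \<Sigma> = (\<Sum>n<N. measure_pmf.prob (vote_pmf Ph L (\<Sigma> n)) {False}) / real N - (1 - \<mu>)"

definition excess :: "(world \<Rightarrow> real) \<Rightarrow> real \<Rightarrow> nat \<Rightarrow> (nat \<Rightarrow> real \<times> real) \<Rightarrow> real" where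
  "excess Ph \<mu> N \<Sigma> = min (excess_H Ph \<mu> N \<Sigma>) (excess_L Ph \<mu> N \<Sigma>)"

definition vote_var :: "(world \<Rightarrow> real) \<Rightarrow> world \<Rightarrow> nat \<Rightarrow> (nat \<Rightarrow> real \<times> real) \<Rightarrow> real" where
  "vote_var Ph w N \<Sigma> = measure_pmf.variance (profile_pmf Ph w N \<Sigma>) (\<lambda>x. real (votesA N x))"

end

theory Submission
  imports Defs
begin

lemma fin_M: "finite (set_pmf (Pi_pmf {..<N} False (p :: nat \<Rightarrow> bool pmf)))"
  by (subst set_Pi_pmf) (auto intro!: finite_PiE_dflt)

lemma bool_expect: "measure_pmf.expectation (q::bool pmf) f = pmf q True * f True + (1 - pmf q True) * f False"
  by (subst integral_measure_pmf_real[where A=UNIV]) (auto simp: UNIV_bool pmf_False_conv_True)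

lemma prod_expect:
  fixes N :: nat and p :: "nat \<Rightarrow> bool pmf" and f :: "nat \<Rightarrow> bool \<Rightarrow> real"
  assumes "\<And>i b. i < N \<Longrightarrow> 0 \<le> f i b"
  shows "measure_pmf.expectation (Pi_pmf {..<N} False p) (\<lambda>x. \<Prod>i<N. f i (x i))
     = (\<Prod>i<N. pmf (p i) True * f i True + (1 - pmf (p i) True) * f i False)"
  by (subst expectation_prod_Pi_pmf) (auto simp: assms bool_expect integrable_measure_pmf_finite)

lemma votes_sum: "real (votesA N x) = (\<Sum>i<N. if x i then 1 else 0)"
  unfolding votesA_def by (simp add: sum.If_cases Int_def)

lemma single_expect:
  fixes N :: nat and p :: "nat \<Rightarrow> bool pmf" and g :: "bool \<Rightarrow> real"
  assumes "i < N"
  shows "measure_pmf.expectation (Pi_pmf {..<N} False p) (\<lambda>x. g (x i))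
     = pmf (p i) True * g True + (1 - pmf (p i) True) * g False"
proof -
  define c where "c = \<bar>g True\<bar> + \<bar>g False\<bar>"
  define f where "f = (\<lambda>k b. if k = i then g b + c else (1::real))"
  have fn: "0 \<le> f k b" for k b unfolding f_def c_def by (cases b) auto
  have "(\<lambda>x. \<Prod>k<N. f k (x k)) = (\<lambda>x. g (x i) + c)"
  proof
    fix x
    have "(\<Prod>k<N. f k (x k)) = (\<Prod>k\<in>{i}. f k (x k))"
      by (rule prod.mono_neutral_right) (auto simp: f_def assms finite_lessThan)
    then show "(\<Prod>k<N. f k (x k)) = g (x i) + c" by (simp add: f_def)
  qed
  moreover have "(\<Prod>k<N. pmf (p k) True * f k True + (1 - pmf (p k) True) * f k False)
      = (\<Prod>k\<in>{i}. pmf (p k) True * f k True + (1 - pmf (p k) True) * f k False)"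
    by (rule prod.mono_neutral_right) (auto simp: f_def assms algebra_simps)
  ultimately have "measure_pmf.expectation (Pi_pmf {..<N} False p) (\<lambda>x. g (x i) + c)
     = pmf (p i) True * (g True + c) + (1 - pmf (p i) True) * (g False + c)"
    using prod_expect[of N f p] fn by (simp add: f_def)
  moreover have "measure_pmf.expectation (Pi_pmf {..<N} False p) (\<lambda>x. g (x i) + c)
     = measure_pmf.expectation (Pi_pmf {..<N} False p) (\<lambda>x. g (x i)) + c"
    by (subst Bochner_Integration.integral_add) (auto simp: integrable_measure_pmf_finite[OF fin_M])
  ultimately show ?thesis by (simp add: algebra_simps)
qed

lemma pair_expect:
  fixes N :: nat and p :: "nat \<Rightarrow> bool pmf" and g h :: "bool \<Rightarrow> real"
  assumes "i < N" "j < N" "i \<noteq> j" "\<And>b. 0 \<le> g b" "\<And>b. 0 \<le> h b"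
  shows "measure_pmf.expectation (Pi_pmf {..<N} False p) (\<lambda>x. g (x i) * h (x j))
     = (pmf (p i) True * g True + (1 - pmf (p i) True) * g False) *
       (pmf (p j) True * h True + (1 - pmf (p j) True) * h False)"
proof -
  define f where "f = (\<lambda>k b. if k = i then g b else if k = j then h b else (1::real))"
  have fn: "0 \<le> f k b" for k b unfolding f_def using assms by auto
  have "(\<lambda>x. \<Prod>k<N. f k (x k)) = (\<lambda>x. g (x i) * h (x j))"
  proof
    fix x
    have "(\<Prod>k<N. f k (x k)) = (\<Prod>k\<in>{i,j}. f k (x k))"
      by (rule prod.mono_neutral_right) (auto simp: f_def assms)
    then show "(\<Prod>k<N. f k (x k)) = g (x i) * h (x j)" using assms by (simp add: f_def)
  qed
  moreover have "(\<Prod>k<N. pmf (p k) True * f k True + (1 - pmf (p k) True) * f k False)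
      = (\<Prod>k\<in>{i,j}. pmf (p k) True * f k True + (1 - pmf (p k) True) * f k False)"
    by (rule prod.mono_neutral_right) (auto simp: f_def assms algebra_simps)
  ultimately show ?thesis
    using prod_expect[of N f p] fn assms by (simp add: f_def)
qed

definition Yv :: "(nat \<Rightarrow> bool pmf) \<Rightarrow> nat \<Rightarrow> (nat \<Rightarrow> bool) \<Rightarrow> real" where
  "Yv p i x = (if x i then 1 else 0) - pmf (p i) True"

lemma EY:
  fixes N :: nat and p :: "nat \<Rightarrow> bool pmf"
  assumes "i < N"
  shows "measure_pmf.expectation (Pi_pmf {..<N} False p) (Yv p i) = 0"
proof -
  have "Yv p i = (\<lambda>x. (\<lambda>b. (if b then 1 else 0) - pmf (p i) True) (x i))"
    by (simp add: fun_eq_iff Yv_def)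
  then show ?thesis
    using single_expect[OF assms, of p "\<lambda>b. (if b then 1 else 0) - pmf (p i) True"]
    by (simp add: algebra_simps)
qed

lemma EYY:
  fixes N :: nat and p :: "nat \<Rightarrow> bool pmf"
  assumes "i < N" "j < N"
  shows "measure_pmf.expectation (Pi_pmf {..<N} False p) (\<lambda>x. Yv p i x * Yv p j x)
      = (if i = j then pmf (p i) True * (1 - pmf (p i) True) else 0)"
proof (cases "i = j")
  case True
  show ?thesis
    using single_expect[OF assms(1), of p "\<lambda>b. ((if b then 1 else 0) - pmf (p i) True)^2"] True
    by (simp add: Yv_def power2_eq_square algebra_simps)
next
  case False
  let ?M = "Pi_pmf {..<N} False p"
  have int: "integrable ?M f" for f :: "_ \<Rightarrow> real" by (rule integrable_measure_pmf_finite[OF fin_M])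
  have g1: "0 \<le> (if b then 1 else 0) - pmf (p i) True + 1" for b
    using pmf_le_1[of "p i" True] by auto
  have g2: "0 \<le> (if b then 1 else 0) - pmf (p j) True + 1" for b
    using pmf_le_1[of "p j" True] by auto
  have "measure_pmf.expectation ?M (\<lambda>x. (Yv p i x + 1) * (Yv p j x + 1)) = 1"
    using pair_expect[OF assms False, of "\<lambda>b. (if b then 1 else 0) - pmf (p i) True + 1"
        "\<lambda>b. (if b then 1 else 0) - pmf (p j) True + 1" p, OF g1 g2]
    by (simp add: Yv_def algebra_simps)
  moreover have "(\<lambda>x. (Yv p i x + 1) * (Yv p j x + 1)) = (\<lambda>x. Yv p i x * Yv p j x + Yv p i x + Yv p j x + 1)"
    by (simp add: algebra_simps)
  ultimately have "measure_pmf.expectation ?M (\<lambda>x. Yv p i x * Yv p j x) + 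
     measure_pmf.expectation ?M (Yv p i) + measure_pmf.expectation ?M (Yv p j) + 1 = 1"
    by (simp add: int)
  then show ?thesis using EY[OF assms(1)] EY[OF assms(2)] False by simp
qed

lemma S_minus_m:
  "real (votesA N x) - (\<Sum>i<N. pmf (p i) True) = (\<Sum>i<N. Yv p i x)"
  by (simp add: votes_sum Yv_def sum_subtractf)

lemma ES:
  fixes N :: nat and p :: "nat \<Rightarrow> bool pmf"
  shows "measure_pmf.expectation (Pi_pmf {..<N} False p) (\<lambda>x. real (votesA N x)) = (\<Sum>i<N. pmf (p i) True)"
proof -
  let ?M = "Pi_pmf {..<N} False p"
  have int: "integrable ?M f" for f :: "_ \<Rightarrow> real" by (rule integrable_measure_pmf_finite[OF fin_M])
  have "(\<lambda>x. real (votesA N x)) = (\<lambda>x. (\<Sum>i<N. Yv p i x) + (\<Sum>i<N. pmf (p i) True))"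
    using S_minus_m by (metis add.commute diff_add_cancel)
  then show ?thesis by (simp add: int EY)
qed

lemma VS:
  fixes N :: nat and p :: "nat \<Rightarrow> bool pmf"
  shows "measure_pmf.variance (Pi_pmf {..<N} False p) (\<lambda>x. real (votesA N x))
      = (\<Sum>i<N. pmf (p i) True * (1 - pmf (p i) True))"
proof -
  let ?M = "Pi_pmf {..<N} False p"
  have int: "integrable ?M f" for f :: "_ \<Rightarrow> real" by (rule integrable_measure_pmf_finite[OF fin_M])
  have "(\<lambda>x. (real (votesA N x) - (\<Sum>i<N. pmf (p i) True))^2) = (\<lambda>x. \<Sum>i<N. \<Sum>j<N. Yv p i x * Yv p j x)"
    by (simp add: S_minus_m power2_eq_square sum_product)
  then have "measure_pmf.variance ?M (\<lambda>x. real (votesA N x)) = (\<Sum>i<N. \<Sum>j<N. 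
       measure_pmf.expectation ?M (\<lambda>x. Yv p i x * Yv p j x))"
    by (simp add: ES int)
  also have "\<dots> = (\<Sum>i<N. \<Sum>j<N. if i = j then pmf (p i) True * (1 - pmf (p i) True) else 0)"
    by (intro sum.cong refl) (simp add: EYY)
  also have "\<dots> = (\<Sum>i<N. pmf (p i) True * (1 - pmf (p i) True))"
    by (simp add: sum.delta)
  finally show ?thesis .
qed

lemma MGF:
  fixes N :: nat and p :: "nat \<Rightarrow> bool pmf" and t :: real
  shows "measure_pmf.expectation (Pi_pmf {..<N} False p)
      (\<lambda>x. exp (t * (real (votesA N x) - (\<Sum>i<N. pmf (p i) True))))
     = (\<Prod>i<N. pmf (p i) True * exp (t * (1 - pmf (p i) True)) + (1 - pmf (p i) True) * exp (- t * pmf (p i) True))"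
proof -
  have "(\<lambda>x. exp (t * (real (votesA N x) - (\<Sum>i<N. pmf (p i) True))))
     = (\<lambda>x. \<Prod>i<N. (\<lambda>i b. exp (t * ((if b then 1 else 0) - pmf (p i) True))) i (x i))"
    by (simp add: S_minus_m sum_distrib_left exp_sum Yv_def)
  then show ?thesis
    using prod_expect[of N "\<lambda>i b. exp (t * ((if b then 1 else 0) - pmf (p i) True))" p] by simp
qed


lemma exp_cubic_lower: "1 + u + u^2/2 + u^3/6 \<le> exp (u::real)"
proof -
  obtain t where t: "exp u = (\<Sum>m<4. u ^ m / fact m) + exp t / fact 4 * u ^ 4"
    using Maclaurin_exp_le[of u 4] by blast
  have "0 \<le> exp t / fact 4 * u ^ 4" by simp
  moreover have "(\<Sum>m<4. u ^ m / fact m) = 1 + u + u^2/2 + u^3/6"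
    by (simp add: eval_nat_numeral fact_numeral)
  ultimately show ?thesis using t by linarith
qed

lemma exp_quad_upper: assumes "\<bar>u\<bar> \<le> 1" shows "exp (u::real) \<le> 1 + u + u^2"
proof (cases "u \<ge> 0")
  case True then show ?thesis using exp_bound[of u] assms by auto
next
  case False
  obtain t where t: "exp u = (\<Sum>m<3. u ^ m / fact m) + exp t / fact 3 * u ^ 3"
    using Maclaurin_exp_le[of u 3] by blast
  have "u^3 \<le> 0" using False mult_nonneg_nonpos[of "u*u" u] by (simp add: power3_eq_cube)
  then have "exp t * u ^ 3 \<le> 0" by (simp add: mult_nonneg_nonpos)
  then have "exp t / fact 3 * u ^ 3 \<le> 0" by (simp add: divide_nonpos_pos)
  moreover have "(\<Sum>m<3. u ^ m / fact m) = 1 + u + u^2/2"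
    by (simp add: eval_nat_numeral fact_numeral)
  moreover have "0 \<le> u^2" by simp
  ultimately show ?thesis using t by linarith
qed

lemma phi_upper:
  fixes q t :: real
  assumes "0 \<le> q" "q \<le> 1" "\<bar>t\<bar> \<le> 1"
  shows "q * exp (t * (1 - q)) + (1 - q) * exp (- t * q) \<le> exp (t^2 * (q * (1 - q)))"
proof -
  have a1: "\<bar>t * (1 - q)\<bar> \<le> 1" using assms by (simp add: abs_mult mult_le_one)
  have a2: "\<bar>- t * q\<bar> \<le> 1" using assms by (simp add: abs_mult mult_le_one)
  have "q * exp (t * (1 - q)) + (1 - q) * exp (- t * q) \<le>
     q * (1 + t * (1 - q) + (t * (1 - q))^2) + (1 - q) * (1 + (- t * q) + (- t * q)^2)"
    using exp_quad_upper[OF a1] exp_quad_upper[OF a2] assms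
    by (intro add_mono mult_left_mono) auto
  also have "\<dots> = 1 + t^2 * (q * (1 - q))" by (simp add: power2_eq_square algebra_simps)
  also have "\<dots> \<le> exp (t^2 * (q * (1 - q)))" by (rule exp_ge_add_one_self)
  finally show ?thesis .
qed

lemma phi_lower:
  fixes q t :: real
  assumes "0 \<le> q" "q \<le> 1" "\<bar>t\<bar> \<le> 1/2"
  shows "exp (t^2 * (q * (1 - q)) / 5) \<le> q * exp (t * (1 - q)) + (1 - q) * exp (- t * q)"
proof -
  define v where "v = q * (1 - q)"
  have v0: "0 \<le> v" using assms by (simp add: v_def)
  have "0 \<le> (q - 1/2)^2" by simp
  then have v1: "v \<le> 1/4" unfolding v_def by (simp add: power2_eq_square algebra_simps)
  have t2: "t^2 \<le> 1/4"
  proof -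
    have "\<bar>t\<bar>^2 \<le> (1/2)^2" using assms by (intro power_mono) auto
    then show ?thesis by (simp add: power2_eq_square)
  qed
  have "q * (1 + t * (1 - q) + (t * (1 - q))^2/2 + (t * (1 - q))^3/6)
        + (1 - q) * (1 + (- t * q) + (- t * q)^2/2 + (- t * q)^3/6)
     \<le> q * exp (t * (1 - q)) + (1 - q) * exp (- t * q)"
    using assms by (intro add_mono mult_left_mono exp_cubic_lower) auto
  moreover have "q * (1 + t * (1 - q) + (t * (1 - q))^2/2 + (t * (1 - q))^3/6)
        + (1 - q) * (1 + (- t * q) + (- t * q)^2/2 + (- t * q)^3/6)
      = 1 + t^2 * v / 2 + (t^2 * v) * (t * (1 - 2*q)) / 6"
    unfolding v_def power2_eq_square power3_eq_cube by (simp add: field_simps)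
  moreover have "\<bar>t * (1 - 2*q)\<bar> \<le> 1/2"
  proof -
    have "\<bar>1 - 2*q\<bar> \<le> 1" using assms by auto
    then have "\<bar>t\<bar> * \<bar>1 - 2*q\<bar> \<le> 1/2 * 1" using assms by (intro mult_mono) auto
    then show ?thesis by (simp add: abs_mult)
  qed
  then have "(t^2 * v) * (t * (1 - 2*q)) \<ge> (t^2 * v) * (-1/2)"
    using v0 by (intro mult_left_mono) auto
  ultimately have low: "1 + 5 * (t^2 * v) / 12 \<le> q * exp (t * (1 - q)) + (1 - q) * exp (- t * q)"
    by linarith
  define y where "y = t^2 * v / 5"
  have y0: "0 \<le> y" using v0 by (simp add: y_def)
  have "t^2 * v \<le> 1/4 * (1/4)" using t2 v1 v0 by (intro mult_mono) auto
  then have y1: "y \<le> 1/80" unfolding y_def by (simp add: mult.commute)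
  have "exp y \<le> 1 + y + y^2" using exp_bound[of y] y0 y1 by auto
  also have "y^2 \<le> y * (1/80)" using mult_left_mono[OF y1 y0] by (simp add: power2_eq_square)
  then have "1 + y + y^2 \<le> 1 + 5 * (t^2 * v) / 12" using y0 unfolding y_def by linarith
  finally show ?thesis using low unfolding y_def v_def by linarith
qed


definition mm :: "(nat \<Rightarrow> bool pmf) \<Rightarrow> nat \<Rightarrow> real" where
  "mm p N = (\<Sum>i<N. pmf (p i) True)"
definition VV :: "(nat \<Rightarrow> bool pmf) \<Rightarrow> nat \<Rightarrow> real" where
  "VV p N = (\<Sum>i<N. pmf (p i) True * (1 - pmf (p i) True))"

lemma VV_bounds: "0 \<le> VV p N" "VV p N \<le> real N / 4"
proof -
  have b: "0 \<le> pmf (p i) True * (1 - pmf (p i) True) \<and> pmf (p i) True * (1 - pmf (p i) True) \<le> 1/4" for i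
  proof -
    have "0 \<le> (pmf (p i) True - 1/2)^2" by simp
    moreover have "pmf (p i) True * pmf (p i) True \<le> pmf (p i) True * 1"
      using pmf_le_1[of "p i" True] pmf_nonneg[of "p i" True] by (intro mult_left_mono) auto
    ultimately show ?thesis using pmf_le_1[of "p i" True] pmf_nonneg[of "p i" True]
      by (auto simp: power2_eq_square algebra_simps)
  qed
  show "0 \<le> VV p N" unfolding VV_def using b by (intro sum_nonneg) auto
  have "VV p N \<le> (\<Sum>i<N. 1/4)" unfolding VV_def using b by (intro sum_mono) auto
  then show "VV p N \<le> real N / 4" by simp
qed

lemma markov_pmf:
  fixes M :: "'a pmf" and g :: "'a \<Rightarrow> real"
  assumes fin: "finite (set_pmf M)" and "\<And>x. 0 \<le> g x" and "\<And>x. x \<in> E \<Longrightarrow> k \<le> g x" and "0 \<le> k"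
  shows "k * measure_pmf.prob M E \<le> measure_pmf.expectation M g"
proof -
  have "k * measure_pmf.prob M E = measure_pmf.expectation M (\<lambda>x. k * indicator E x)"
    by simp
  also have "\<dots> \<le> measure_pmf.expectation M g"
    using assms by (intro integral_mono integrable_measure_pmf_finite[OF fin]) (auto simp: indicator_def)
  finally show ?thesis .
qed

lemma cantelli:
  fixes N :: nat and p :: "nat \<Rightarrow> bool pmf" and s d W :: real
  assumes "s * s = 1" "0 < d" "VV p N \<le> W" "0 < W"
  shows "measure_pmf.prob (Pi_pmf {..<N} False p) {x. d \<le> s * (real (votesA N x) - mm p N)} \<le> W / (W + d^2)"
proof -
  let ?M = "Pi_pmf {..<N} False p"
  let ?S = "\<lambda>x. real (votesA N x)"
  have int: "integrable ?M f" for f :: "_ \<Rightarrow> real" by (rule integrable_measure_pmf_finite[OF fin_M])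
  define u where "u = W / d"
  have u0: "0 < u" using assms by (simp add: u_def)
  define g where "g = (\<lambda>x. (s * (?S x - mm p N) + u)^2)"
  have ss: "s * (s * y) = y" for y using assms(1) by (metis mult.assoc mult_1)
  have gexp: "g = (\<lambda>x. (?S x - mm p N)^2 + (2 * s * u) * (?S x - mm p N) + u^2)"
    by (auto simp: g_def fun_eq_iff power2_eq_square algebra_simps ss)
  have E1: "measure_pmf.expectation ?M (\<lambda>x. ?S x - mm p N) = 0"
    by (simp add: int ES mm_def)
  have E2: "measure_pmf.expectation ?M (\<lambda>x. (?S x - mm p N)^2) = VV p N"
    using VS[of N p] by (simp add: ES mm_def VV_def)
  have Eg: "measure_pmf.expectation ?M g = VV p N + u^2"
    unfolding gexp by (simp add: int E1 E2)
  have "(d + u)^2 * measure_pmf.prob ?M {x. d \<le> s * (?S x - mm p N)} \<le> measure_pmf.expectation ?M g"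
  proof (rule markov_pmf[OF fin_M])
    fix x assume "x \<in> {x. d \<le> s * (?S x - mm p N)}"
    then have "d + u \<le> s * (?S x - mm p N) + u" by simp
    then show "(d + u)^2 \<le> g x" unfolding g_def using assms u0 by (intro power_mono) auto
  qed (auto simp: g_def)
  then have "(d + u)^2 * measure_pmf.prob ?M {x. d \<le> s * (?S x - mm p N)} \<le> W + u^2"
    using Eg assms by simp
  moreover have "0 < (d + u)^2" using u0 assms by simp
  ultimately have "measure_pmf.prob ?M {x. d \<le> s * (?S x - mm p N)} \<le> (W + u^2) / (d + u)^2"
    by (simp add: field_simps)
  also have "(W + u^2) / (d + u)^2 = W / (W + d^2)"
  proof -
    have du: "d * u = W" using assms by (simp add: u_def)
    have "(W + u^2) * (W + d^2) = W * (d + u)^2"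
    proof -
      have "(W + u^2) * (W + d^2) = W*W + W*d^2 + u^2*W + (d*u)^2" by (simp add: algebra_simps power2_eq_square)
      also have "\<dots> = W * d^2 + 2 * W * (d * u) + W * u^2" using du by (simp add: power2_eq_square algebra_simps)
      also have "\<dots> = W * (d + u)^2" by (simp add: algebra_simps power2_eq_square)
      finally show ?thesis .
    qed
    moreover have "0 < W + d^2" "0 < (d + u)^2" using assms u0 by (auto intro: add_pos_nonneg)
    ultimately show ?thesis by (simp add: frac_eq_eq)
  qed
  finally show ?thesis .
qed


lemma EZ_lower:
  fixes N :: nat and p :: "nat \<Rightarrow> bool pmf" and t :: real
  assumes "\<bar>t\<bar> \<le> 1/2"
  shows "exp (t^2 * VV p N / 5) \<le> measure_pmf.expectation (Pi_pmf {..<N} False p)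
      (\<lambda>x. exp (t * (real (votesA N x) - mm p N)))"
proof -
  have "exp (t^2 * VV p N / 5) = (\<Prod>i<N. exp (t^2 * (pmf (p i) True * (1 - pmf (p i) True)) / 5))"
    by (simp add: VV_def exp_sum[symmetric] sum_distrib_left sum_divide_distrib)
  also have "\<dots> \<le> (\<Prod>i<N. pmf (p i) True * exp (t * (1 - pmf (p i) True)) + (1 - pmf (p i) True) * exp (- t * pmf (p i) True))"
    using assms by (intro prod_mono conjI phi_lower) (auto simp: pmf_le_1)
  finally show ?thesis by (simp add: MGF mm_def)
qed

lemma EZ_upper:
  fixes N :: nat and p :: "nat \<Rightarrow> bool pmf" and t :: real
  assumes "\<bar>t\<bar> \<le> 1"
  shows "measure_pmf.expectation (Pi_pmf {..<N} False p)
      (\<lambda>x. exp (t * (real (votesA N x) - mm p N))) \<le> exp (t^2 * VV p N)"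
proof -
  have "(\<Prod>i<N. pmf (p i) True * exp (t * (1 - pmf (p i) True)) + (1 - pmf (p i) True) * exp (- t * pmf (p i) True))
     \<le> (\<Prod>i<N. exp (t^2 * (pmf (p i) True * (1 - pmf (p i) True))))"
    using assms by (intro prod_mono conjI phi_upper add_nonneg_nonneg mult_nonneg_nonneg) (auto simp: pmf_le_1)
  also have "\<dots> = exp (t^2 * VV p N)"
    by (simp add: VV_def exp_sum[symmetric] sum_distrib_left)
  finally show ?thesis by (simp add: MGF mm_def)
qed

lemma anti:
  fixes N :: nat and p :: "nat \<Rightarrow> bool pmf" and s l a :: real
  assumes ss: "s * s = 1" and l0: "0 < l" and l1: "l \<le> 1/2"
    and cond: "2 * exp (l * a) \<le> exp (l^2 * VV p N / 5)"
  shows "exp (- (4 * l^2 * VV p N)) / 4 \<le>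
     measure_pmf.prob (Pi_pmf {..<N} False p) {x. a \<le> s * (real (votesA N x) - mm p N)}"
proof -
  let ?M = "Pi_pmf {..<N} False p"
  let ?S = "\<lambda>x. real (votesA N x)"
  let ?E = "{x. a \<le> s * (?S x - mm p N)}"
  have int: "integrable ?M f" for f :: "_ \<Rightarrow> real" by (rule integrable_measure_pmf_finite[OF fin_M])
  have "(s - 1) * (s + 1) = 0" using ss by (simp add: algebra_simps)
  then have "s = 1 \<or> s = -1" by (simp add: eq_neg_iff_add_eq_0)
  then have sabs: "\<bar>s\<bar> = 1" by auto
  define Z where "Z = (\<lambda>x. exp ((l * s) * (?S x - mm p N)))"
  define EZ where "EZ = measure_pmf.expectation ?M Z"
  define EZ2 where "EZ2 = measure_pmf.expectation ?M (\<lambda>x. (Z x)^2)"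
  have t1: "\<bar>l * s\<bar> \<le> 1/2" using sabs l0 l1 by (simp add: abs_mult)
  have t2: "\<bar>(2 * l * s)\<bar> \<le> 1" using sabs l0 l1 by (simp add: abs_mult)
  have s2: "s^2 = 1" using ss by (simp add: power2_eq_square)
  have sq1: "(l * s)^2 = l^2" by (simp add: power_mult_distrib s2)
  have sq2: "(2 * l * s)^2 = 4 * l^2" by (simp add: power_mult_distrib s2)
  have EZl: "exp (l^2 * VV p N / 5) \<le> EZ"
    using EZ_lower[OF t1, where p=p and N=N] unfolding EZ_def Z_def sq1 .
  have Z2: "(\<lambda>x. (Z x)^2) = (\<lambda>x. exp ((2 * l * s) * (?S x - mm p N)))"
    by (auto simp: Z_def fun_eq_iff power2_eq_square exp_add[symmetric] algebra_simps)
  have EZ2u: "EZ2 \<le> exp (4 * l^2 * VV p N)"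
    using EZ_upper[OF t2, where p=p and N=N] unfolding EZ2_def Z2 sq2 by simp
  have "0 \<le> l^2 * VV p N / 5" using VV_bounds[of p N] by simp
  then have EZ1: "1 \<le> EZ" using EZl by (meson one_le_exp_iff order_trans)
  have EZ2p: "0 < EZ2"
  proof -
    have v0: "0 \<le> measure_pmf.variance ?M Z" by (rule measure_pmf.variance_positive)
    have "measure_pmf.variance ?M Z = EZ2 - EZ^2"
      unfolding EZ_def EZ2_def by (rule measure_pmf.variance_eq) (rule int)+
    then have "EZ * EZ \<le> EZ2" using v0 by (simp add: power2_eq_square)
    moreover have "1 * 1 \<le> EZ * EZ" using EZ1 by (intro mult_mono) auto
    ultimately show ?thesis by linarith
  qed
  define th where "th = 2 * EZ2 / EZ"
  have th0: "0 < th" using EZ1 EZ2p by (simp add: th_def)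
  have pw: "Z x \<le> exp (l * a) + (Z x)^2 / (2 * th) + th / 2 * indicator ?E x" for x
  proof (cases "x \<in> ?E")
    case True
    have "0 \<le> (Z x - th)^2" by simp
    then have "2 * th * Z x \<le> (Z x)^2 + th^2" by (simp add: power2_eq_square algebra_simps)
    then have "Z x \<le> (Z x)^2 / (2 * th) + th / 2" using th0 by (simp add: field_simps power2_eq_square)
    moreover have ind: "indicator ?E x = (1::real)" using True by simp
    ultimately show ?thesis using exp_gt_zero[of "l * a"] by (simp only: mult_1_right)
  next
    case False
    then have "s * (?S x - mm p N) < a" by simp
    then have "l * (s * (?S x - mm p N)) \<le> l * a" using l0 by simp
    then have "Z x \<le> exp (l * a)" unfolding Z_def by (simp add: mult.assoc)
    moreover have "0 \<le> (Z x)^2 / (2 * th)" using th0 by simp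
    ultimately show ?thesis using False by simp
  qed
  have "EZ \<le> measure_pmf.expectation ?M (\<lambda>x. exp (l * a) + (Z x)^2 / (2 * th) + th / 2 * indicator ?E x)"
    unfolding EZ_def using pw by (intro integral_mono int) auto
  also have "\<dots> = exp (l * a) + EZ2 / (2 * th) + th / 2 * measure_pmf.prob ?M ?E"
    by (simp add: int EZ2_def)
  also have "EZ2 / (2 * th) = EZ / 4" using EZ1 EZ2p by (simp add: th_def field_simps)
  finally have "EZ - exp (l * a) - EZ / 4 \<le> th / 2 * measure_pmf.prob ?M ?E" by simp
  moreover have "exp (l * a) \<le> EZ / 2" using cond EZl by simp
  ultimately have "EZ / 4 \<le> th / 2 * measure_pmf.prob ?M ?E" by simp
  then have "EZ / (2 * th) \<le> measure_pmf.prob ?M ?E" using th0 by (simp add: field_simps)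
  moreover have "EZ / (2 * th) = EZ * EZ / (4 * EZ2)" using EZ1 EZ2p by (simp add: th_def field_simps)
  moreover have "1 / (4 * EZ2) \<le> EZ * EZ / (4 * EZ2)"
  proof -
    have e0: "0 \<le> EZ" using EZ1 by linarith
    have "1 * 1 \<le> EZ * EZ" by (rule mult_mono[OF EZ1 EZ1 e0]) simp
    then have "1 \<le> EZ * EZ" by simp
    moreover have "0 \<le> 4 * EZ2" using EZ2p by simp
    ultimately show ?thesis by (rule divide_right_mono)
  qed
  moreover have "exp (- (4 * l^2 * VV p N)) / 4 \<le> 1 / (4 * EZ2)"
  proof -
    have "inverse (exp (4 * l^2 * VV p N)) \<le> inverse EZ2" using EZ2u EZ2p by (rule le_imp_inverse_le)
    then have "inverse (exp (4 * l^2 * VV p N)) / 4 \<le> inverse EZ2 / 4" by simp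
    then show ?thesis by (simp only: exp_minus) (simp add: inverse_eq_divide mult.commute)
  qed
  ultimately show ?thesis by linarith
qed


lemma prob_lt:
  fixes M :: "'a pmf" and g :: "'a \<Rightarrow> real"
  shows "measure_pmf.prob M {x. g x < t} = 1 - measure_pmf.prob M {x. t \<le> g x}"
proof -
  have "{x. g x < t} = space (measure_pmf M) - {x. t \<le> g x}" by auto
  then show ?thesis using measure_pmf.prob_compl[of "{x. t \<le> g x}" M] by simp
qed

lemma prob_mono_pmf: "A \<subseteq> B \<Longrightarrow> measure_pmf.prob M A \<le> measure_pmf.prob M B"
  by (rule measure_pmf.finite_measure_mono) auto

lemma Gi:
  fixes N :: nat and pL pH :: "nat \<Rightarrow> bool pmf" and f \<mu> prL prH :: real
  assumes N: "0 < N" and f0: "0 < f" and fH: "f \<le> mm pH N / N - \<mu>" and fL: "f \<le> \<mu> - mm pL N / N"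
    and pr: "0 \<le> prL" "0 \<le> prH" "prL + prH = 1"
  shows "1 - 1 / (4 * N * f^2) \<le>
    prL * measure_pmf.prob (Pi_pmf {..<N} False pL) {x. real (votesA N x) < \<mu> * N}
  + prH * measure_pmf.prob (Pi_pmf {..<N} False pH) {x. \<mu> * N \<le> real (votesA N x)}"
proof -
  define d where "d = N * f"
  define W where "W = real N / 4"
  have d0: "0 < d" using N f0 by (simp add: d_def)
  have W0: "0 < W" using N by (simp add: W_def)
  have bnd: "W / (W + d^2) \<le> 1 / (4 * N * f^2)"
  proof -
    have "W / (W + d^2) \<le> W / d^2" 
    proof (rule divide_left_mono)
      show "d^2 \<le> W + d^2" using W0 by simp
      show "0 \<le> W" using W0 by simp
      have "0 < W + d^2" using W0 by (simp add: add_pos_nonneg)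
      moreover have "0 < d^2" using d0 by simp
      ultimately show "0 < (W + d^2) * d^2" by (rule mult_pos_pos)
    qed
    also have "W / d^2 = 1 / (4 * N * f^2)" using N f0 by (simp add: W_def d_def power2_eq_square field_simps)
    finally show ?thesis .
  qed
  have mH: "N * (mm pH N / N - \<mu>) = mm pH N - \<mu> * N" using N by (simp add: field_simps)
  have mL: "N * (\<mu> - mm pL N / N) = \<mu> * N - mm pL N" using N by (simp add: field_simps)
  have dH: "d \<le> mm pH N - \<mu> * N" unfolding d_def mH[symmetric] using fH N by (intro mult_left_mono) auto
  have dL: "d \<le> \<mu> * N - mm pL N" unfolding d_def mL[symmetric] using fL N by (intro mult_left_mono) auto
  have "measure_pmf.prob (Pi_pmf {..<N} False pH) {x. real (votesA N x) < \<mu> * N}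
     \<le> measure_pmf.prob (Pi_pmf {..<N} False pH) {x. d \<le> (-1) * (real (votesA N x) - mm pH N)}"
    using dH by (intro prob_mono_pmf) auto
  also have "\<dots> \<le> W / (W + d^2)"
    using d0 W0 VV_bounds[of pH N] by (intro cantelli) (auto simp: W_def)
  finally have H: "1 - W / (W + d^2) \<le> measure_pmf.prob (Pi_pmf {..<N} False pH) {x. \<mu> * N \<le> real (votesA N x)}"
    using prob_lt[of "Pi_pmf {..<N} False pH" "\<lambda>x. real (votesA N x)" "\<mu> * N"] by linarith
  have "measure_pmf.prob (Pi_pmf {..<N} False pL) {x. \<mu> * N \<le> real (votesA N x)}
     \<le> measure_pmf.prob (Pi_pmf {..<N} False pL) {x. d \<le> 1 * (real (votesA N x) - mm pL N)}"
    using dL by (intro prob_mono_pmf) auto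
  also have "\<dots> \<le> W / (W + d^2)"
    using d0 W0 VV_bounds[of pL N] by (intro cantelli) (auto simp: W_def)
  finally have L: "1 - W / (W + d^2) \<le> measure_pmf.prob (Pi_pmf {..<N} False pL) {x. real (votesA N x) < \<mu> * N}"
    using prob_lt[of "Pi_pmf {..<N} False pL" "\<lambda>x. real (votesA N x)" "\<mu> * N"] by linarith
  have "prL * (1 - W / (W + d^2)) + prH * (1 - W / (W + d^2)) \<le>
    prL * measure_pmf.prob (Pi_pmf {..<N} False pL) {x. real (votesA N x) < \<mu> * N}
  + prH * measure_pmf.prob (Pi_pmf {..<N} False pH) {x. \<mu> * N \<le> real (votesA N x)}"
    using H L pr by (intro add_mono mult_left_mono) auto
  moreover have "prL * (1 - W / (W + d^2)) + prH * (1 - W / (W + d^2)) = 1 - W / (W + d^2)"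
  proof -
    have "prL * (1 - W / (W + d^2)) + prH * (1 - W / (W + d^2)) = (prL + prH) * (1 - W / (W + d^2))"
      by (rule distrib_right[symmetric])
    then show ?thesis using pr by simp
  qed
  ultimately show ?thesis using bnd by linarith
qed

lemma prob_le1: "measure_pmf.prob M A \<le> 1" by simp

lemma Gii:
  fixes N :: nat and pL pH :: "nat \<Rightarrow> bool pmf" and c \<mu> prL prH :: real
  assumes N: "0 < N" and c0: "0 < c"
    and cs: "sqrt N * (mm pH N / N - \<mu>) \<le> - c \<or> sqrt N * (\<mu> - mm pL N / N) \<le> - c"
    and pr: "0 \<le> prL" "0 \<le> prH" "prL + prH = 1"
  shows "prL * measure_pmf.prob (Pi_pmf {..<N} False pL) {x. real (votesA N x) < \<mu> * N}
  + prH * measure_pmf.prob (Pi_pmf {..<N} False pH) {x. \<mu> * N \<le> real (votesA N x)}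
    \<le> 1 - min prL prH * (4 * c^2 / (1 + 4 * c^2))"
proof -
  define d where "d = c * sqrt N"
  define W where "W = real N / 4"
  define r where "r = 1 / (1 + 4 * c^2)"
  have d0: "0 < d" using N c0 by (simp add: d_def)
  have W0: "0 < W" using N by (simp add: W_def)
  have sN: "sqrt N * sqrt N = N" by simp
  have Wd: "W + d^2 = W * (1 + 4 * c^2)" unfolding W_def d_def by (simp add: power_mult_distrib algebra_simps)
  have Wr: "W / (W + d^2) = r"
    unfolding Wd r_def using W0 by simp
  have cpos: "0 < 1 + 4 * c^2" by (simp add: add_pos_nonneg)
  have r1: "1 - r = 4 * c^2 / (1 + 4 * c^2)" unfolding r_def
  proof -
    have "1 = (1 + 4 * c^2) / (1 + 4 * c^2)" using cpos by simp
    also have "\<dots> = 1 / (1 + 4 * c^2) + 4 * c^2 / (1 + 4 * c^2)" by (rule add_divide_distrib)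
    finally show "1 - 1 / (1 + 4 * c^2) = 4 * c^2 / (1 + 4 * c^2)" by linarith
  qed
  have sN2: "sqrt N * (sqrt N * y) = N * y" for y by (simp add: mult.assoc[symmetric] del: real_sqrt_mult_self) (simp)
  have mH: "mm pH N - \<mu> * N = sqrt N * (sqrt N * (mm pH N / N - \<mu>))"
    using N unfolding sN2 by (simp add: field_simps)
  have mL: "\<mu> * N - mm pL N = sqrt N * (sqrt N * (\<mu> - mm pL N / N))"
    using N unfolding sN2 by (simp add: field_simps)
  have PL1: "measure_pmf.prob (Pi_pmf {..<N} False pL) {x. real (votesA N x) < \<mu> * N} \<le> 1" by simp
  have PH1: "measure_pmf.prob (Pi_pmf {..<N} False pH) {x. \<mu> * N \<le> real (votesA N x)} \<le> 1" by simp
  have mn: "min prL prH \<le> prL" "min prL prH \<le> prH" by auto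
  have r0: "0 \<le> 1 - r" unfolding r1 by simp
  from cs show ?thesis
  proof
    assume h: "sqrt N * (mm pH N / N - \<mu>) \<le> - c"
    have "mm pH N - \<mu> * N \<le> sqrt N * (- c)" unfolding mH by (intro mult_left_mono h) auto
    then have dH: "d \<le> \<mu> * N - mm pH N" by (simp add: d_def mult.commute)
    have "measure_pmf.prob (Pi_pmf {..<N} False pH) {x. \<mu> * N \<le> real (votesA N x)}
       \<le> measure_pmf.prob (Pi_pmf {..<N} False pH) {x. d \<le> 1 * (real (votesA N x) - mm pH N)}"
      using dH by (intro prob_mono_pmf) auto
    also have "\<dots> \<le> W / (W + d^2)"
      using d0 W0 VV_bounds[of pH N] by (intro cantelli) (auto simp: W_def)
    finally have "measure_pmf.prob (Pi_pmf {..<N} False pH) {x. \<mu> * N \<le> real (votesA N x)} \<le> r"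
      using Wr by simp
    then have "prL * measure_pmf.prob (Pi_pmf {..<N} False pL) {x. real (votesA N x) < \<mu> * N}
      + prH * measure_pmf.prob (Pi_pmf {..<N} False pH) {x. \<mu> * N \<le> real (votesA N x)} \<le> prL * 1 + prH * r"
      using PL1 pr by (intro add_mono mult_left_mono) auto
    also have "prL * 1 + prH * r = 1 - prH * (1 - r)" using pr by (simp add: algebra_simps)
    also have "\<dots> \<le> 1 - min prL prH * (1 - r)" using mn r0 by (simp add: mult_right_mono)
    finally show ?thesis unfolding r1 .
  next
    assume h: "sqrt N * (\<mu> - mm pL N / N) \<le> - c"
    have "\<mu> * N - mm pL N \<le> sqrt N * (- c)" unfolding mL by (intro mult_left_mono h) auto
    then have dL: "d \<le> mm pL N - \<mu> * N" by (simp add: d_def mult.commute)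
    have "measure_pmf.prob (Pi_pmf {..<N} False pL) {x. real (votesA N x) < \<mu> * N}
       \<le> measure_pmf.prob (Pi_pmf {..<N} False pL) {x. d \<le> (-1) * (real (votesA N x) - mm pL N)}"
      using dL by (intro prob_mono_pmf) auto
    also have "\<dots> \<le> W / (W + d^2)"
      using d0 W0 VV_bounds[of pL N] by (intro cantelli) (auto simp: W_def)
    finally have "measure_pmf.prob (Pi_pmf {..<N} False pL) {x. real (votesA N x) < \<mu> * N} \<le> r"
      using Wr by simp
    then have "prL * measure_pmf.prob (Pi_pmf {..<N} False pL) {x. real (votesA N x) < \<mu> * N}
      + prH * measure_pmf.prob (Pi_pmf {..<N} False pH) {x. \<mu> * N \<le> real (votesA N x)} \<le> prL * r + prH * 1"
      using PH1 pr by (intro add_mono mult_left_mono) auto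
    also have "prL * r + prH * 1 = 1 - prL * (1 - r)" using pr by (simp add: algebra_simps)
    also have "\<dots> \<le> 1 - min prL prH * (1 - r)" using mn r0 by (simp add: mult_right_mono)
    finally show ?thesis unfolding r1 .
  qed
qed

lemma anti_app:
  fixes N :: nat and p :: "nat \<Rightarrow> bool pmf" and s K bt \<psi> :: real
  assumes ss: "s * s = 1" and N: "0 < N" and Nb: "4 * bt^2 \<le> N" and b1: "1 \<le> bt"
    and bK: "bt * (K + 1) \<le> bt^2 * \<psi> / 5" and V: "\<psi> * N \<le> VV p N"
  shows "exp (- (bt^2)) / 4 \<le>
     measure_pmf.prob (Pi_pmf {..<N} False p) {x. K * sqrt N \<le> s * (real (votesA N x) - mm p N)}"
proof -
  define l where "l = bt / sqrt N"
  have sN0: "0 < sqrt N" using N by simp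
  have sNN: "sqrt N ^ 2 = N" by simp
  have "sqrt ((2 * bt)^2) \<le> sqrt N" using Nb by (intro real_sqrt_le_mono) (simp add: power_mult_distrib)
  moreover have "sqrt ((2 * bt)^2) = 2 * bt" using b1 by (subst real_sqrt_abs) simp
  ultimately have b2: "2 * bt \<le> sqrt N" by linarith
  have l0: "0 < l" using b1 sN0 by (simp add: l_def)
  have l1: "l \<le> 1/2" using b2 sN0 by (simp add: l_def field_simps)
  have l2: "l^2 = bt^2 / N" by (simp add: l_def power_divide)
  have la: "l * (K * sqrt N) = bt * K" using sN0 by (simp add: l_def)
  have V0: "0 \<le> VV p N" "VV p N \<le> N / 4" using VV_bounds[of p N] by auto
  have "bt^2 * \<psi> / 5 \<le> l^2 * VV p N / 5"
  proof -
    have "bt^2 * \<psi> = bt^2 / N * (\<psi> * N)" using N by simp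
    also have "\<dots> \<le> bt^2 / N * VV p N" using V by (intro mult_left_mono) auto
    finally show ?thesis unfolding l2 by simp
  qed
  then have c1: "bt * K + 1 \<le> l^2 * VV p N / 5" using bK b1 by (simp add: algebra_simps)
  have "2 * exp (l * (K * sqrt N)) \<le> exp 1 * exp (bt * K)"
    unfolding la using exp_ge_add_one_self[of 1] by simp
  also have "\<dots> = exp (bt * K + 1)" by (simp add: exp_add[symmetric])
  also have "\<dots> \<le> exp (l^2 * VV p N / 5)" using c1 by simp
  finally have cond: "2 * exp (l * (K * sqrt N)) \<le> exp (l^2 * VV p N / 5)" .
  have "4 * l^2 * VV p N \<le> bt^2"
  proof -
    have "4 * l^2 * VV p N = 4 * (bt^2 / N) * VV p N" by (simp add: l2)
    also have "\<dots> \<le> 4 * (bt^2 / N) * (N / 4)" using V0 by (intro mult_left_mono) auto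
    also have "\<dots> = bt^2" using N by simp
    finally show ?thesis .
  qed
  then have "exp (- (bt^2)) / 4 \<le> exp (- (4 * l^2 * VV p N)) / 4" by simp
  also have "\<dots> \<le> measure_pmf.prob (Pi_pmf {..<N} False p) {x. K * sqrt N \<le> s * (real (votesA N x) - mm p N)}"
    by (rule anti[OF ss l0 l1 cond])
  finally show ?thesis .
qed

lemma Giii:
  fixes N :: nat and pL pH :: "nat \<Rightarrow> bool pmf" and K bt \<psi> \<mu> prL prH :: real
  assumes N: "0 < N" and Nb: "4 * bt^2 \<le> N" and b1: "1 \<le> bt"
    and bK: "bt * (K + 1) \<le> bt^2 * \<psi> / 5" and VL: "\<psi> * N \<le> VV pL N" and VH: "\<psi> * N \<le> VV pH N"
    and cs: "sqrt N * (mm pH N / N - \<mu>) < K \<or> sqrt N * (\<mu> - mm pL N / N) < K"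
    and pr: "0 \<le> prL" "0 \<le> prH" "prL + prH = 1"
  shows "prL * measure_pmf.prob (Pi_pmf {..<N} False pL) {x. real (votesA N x) < \<mu> * N}
  + prH * measure_pmf.prob (Pi_pmf {..<N} False pH) {x. \<mu> * N \<le> real (votesA N x)}
    \<le> 1 - min prL prH * (exp (- (bt^2)) / 4)"
proof -
  define r where "r = exp (- (bt^2)) / 4"
  have r0: "0 \<le> r" by (simp add: r_def)
  have sN2: "sqrt N * (sqrt N * y) = N * y" for y by (simp add: mult.assoc[symmetric] del: real_sqrt_mult_self) (simp)
  have sN0: "0 < sqrt N" using N by simp
  have mH: "mm pH N - \<mu> * N = sqrt N * (sqrt N * (mm pH N / N - \<mu>))"
    using N unfolding sN2 by (simp add: field_simps)
  have mL: "\<mu> * N - mm pL N = sqrt N * (sqrt N * (\<mu> - mm pL N / N))"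
    using N unfolding sN2 by (simp add: field_simps)
  have PL1: "measure_pmf.prob (Pi_pmf {..<N} False pL) {x. real (votesA N x) < \<mu> * N} \<le> 1" by simp
  have PH1: "measure_pmf.prob (Pi_pmf {..<N} False pH) {x. \<mu> * N \<le> real (votesA N x)} \<le> 1" by simp
  have mn: "min prL prH \<le> prL" "min prL prH \<le> prH" by auto
  from cs show ?thesis
  proof
    assume h: "sqrt N * (mm pH N / N - \<mu>) < K"
    have "mm pH N - \<mu> * N < sqrt N * K" unfolding mH using sN0 h by simp
    then have dH: "mm pH N - K * sqrt N < \<mu> * N" by (simp add: mult.commute)
    have "r \<le> measure_pmf.prob (Pi_pmf {..<N} False pH) {x. K * sqrt N \<le> (-1) * (real (votesA N x) - mm pH N)}"
      unfolding r_def by (rule anti_app[OF _ N Nb b1 bK VH]) simp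
    also have "\<dots> \<le> measure_pmf.prob (Pi_pmf {..<N} False pH) {x. real (votesA N x) < \<mu> * N}"
      using dH by (intro prob_mono_pmf) auto
    finally have "measure_pmf.prob (Pi_pmf {..<N} False pH) {x. \<mu> * N \<le> real (votesA N x)} \<le> 1 - r"
      using prob_lt[of "Pi_pmf {..<N} False pH" "\<lambda>x. real (votesA N x)" "\<mu> * N"] by linarith
    then have "prL * measure_pmf.prob (Pi_pmf {..<N} False pL) {x. real (votesA N x) < \<mu> * N}
      + prH * measure_pmf.prob (Pi_pmf {..<N} False pH) {x. \<mu> * N \<le> real (votesA N x)} \<le> prL * 1 + prH * (1 - r)"
      using PL1 pr by (intro add_mono mult_left_mono) auto
    also have "prL * 1 + prH * (1 - r) = 1 - prH * r" using pr by (simp add: algebra_simps)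
    also have "\<dots> \<le> 1 - min prL prH * r" using mn r0 by (simp add: mult_right_mono)
    finally show ?thesis unfolding r_def .
  next
    assume h: "sqrt N * (\<mu> - mm pL N / N) < K"
    have "\<mu> * N - mm pL N < sqrt N * K" unfolding mL using sN0 h by simp
    then have dL: "\<mu> * N < mm pL N + K * sqrt N" by (simp add: mult.commute)
    have "r \<le> measure_pmf.prob (Pi_pmf {..<N} False pL) {x. K * sqrt N \<le> 1 * (real (votesA N x) - mm pL N)}"
      unfolding r_def by (rule anti_app[OF _ N Nb b1 bK VL]) simp
    also have "\<dots> \<le> measure_pmf.prob (Pi_pmf {..<N} False pL) {x. \<mu> * N \<le> real (votesA N x)}"
      using dL by (intro prob_mono_pmf) auto
    finally have "measure_pmf.prob (Pi_pmf {..<N} False pL) {x. real (votesA N x) < \<mu> * N} \<le> 1 - r"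
      using prob_lt[of "Pi_pmf {..<N} False pL" "\<lambda>x. real (votesA N x)" "\<mu> * N"] by linarith
    then have "prL * measure_pmf.prob (Pi_pmf {..<N} False pL) {x. real (votesA N x) < \<mu> * N}
      + prH * measure_pmf.prob (Pi_pmf {..<N} False pH) {x. \<mu> * N \<le> real (votesA N x)} \<le> prL * (1 - r) + prH * 1"
      using PH1 pr by (intro add_mono mult_left_mono) auto
    also have "prL * (1 - r) + prH * 1 = 1 - prL * r" using pr by (simp add: algebra_simps)
    also have "\<dots> \<le> 1 - min prL prH * r" using mn r0 by (simp add: mult_right_mono)
    finally show ?thesis unfolding r_def .
  qed
qed


lemma ex_not: "eventually Q F \<Longrightarrow> \<not> eventually P F \<Longrightarrow> \<exists>x. Q x \<and> \<not> P x"
  using not_eventually_impI[of Q F P] not_eventuallyD by blast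

theorem theorem4:
  fixes prior Ph :: "world \<Rightarrow> real" and \<mu> :: real
    and \<Sigma> :: "nat \<Rightarrow> nat \<Rightarrow> real \<times> real"
  assumes prior_pos: "prior L > 0" "prior H > 0" and prior_sum: "prior L + prior H = 1"
    and sig: "0 \<le> Ph L" "Ph L < Ph H" "Ph H \<le> 1"
    and mu: "0 < \<mu>" "\<mu> < 1"
    and strat: "\<And>N n. 1 \<le> N \<Longrightarrow> n < N \<Longrightarrow>
        0 \<le> fst (\<Sigma> N n) \<and> fst (\<Sigma> N n) \<le> 1 \<and> 0 \<le> snd (\<Sigma> N n) \<and> snd (\<Sigma> N n) \<le> 1"
  shows
   "(liminf (\<lambda>N. ereal (sqrt (real N) * excess Ph \<mu> N (\<Sigma> N))) = \<infinity> \<longrightarrow>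
       (\<lambda>N. fidelity prior Ph \<mu> N (\<Sigma> N)) \<longlonglongrightarrow> 1)
  \<and> (liminf (\<lambda>N. ereal (sqrt (real N) * excess Ph \<mu> N (\<Sigma> N))) < 0 \<longrightarrow>
       \<not> (\<lambda>N. fidelity prior Ph \<mu> N (\<Sigma> N)) \<longlonglongrightarrow> 1)
  \<and> (0 \<le> liminf (\<lambda>N. ereal (sqrt (real N) * excess Ph \<mu> N (\<Sigma> N))) \<and>
      liminf (\<lambda>N. ereal (sqrt (real N) * excess Ph \<mu> N (\<Sigma> N))) < \<infinity> \<and>
      (\<exists>\<psi>>0. \<forall>N\<ge>1. \<forall>w. vote_var Ph w N (\<Sigma> N) \<ge> \<psi> * real N) \<longrightarrow>
       \<not> (\<lambda>N. fidelity prior Ph \<mu> N (\<Sigma> N)) \<longlonglongrightarrow> 1)"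
proof -
  define P where "P = (\<lambda>w N n. vote_pmf Ph w (\<Sigma> N n))"
  define X where "X = (\<lambda>N. ereal (sqrt (real N) * excess Ph \<mu> N (\<Sigma> N)))"
  define fid where "fid = (\<lambda>N. fidelity prior Ph \<mu> N (\<Sigma> N))"
  have fid_eq: "fid N = prior L * measure_pmf.prob (Pi_pmf {..<N} False (P L N)) {x. real (votesA N x) < \<mu> * N}
     + prior H * measure_pmf.prob (Pi_pmf {..<N} False (P H N)) {x. \<mu> * N \<le> real (votesA N x)}" for N
    by (simp add: fid_def fidelity_def lamA_def lamR_def profile_pmf_def P_def)
  have exc: "excess Ph \<mu> N (\<Sigma> N) = min (mm (P H N) N / N - \<mu>) (\<mu> - mm (P L N) N / N)" if "0 < N" for N
  proof -
    have "excess_H Ph \<mu> N (\<Sigma> N) = mm (P H N) N / N - \<mu>"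
      by (simp add: excess_H_def mm_def P_def measure_pmf_single)
    moreover have "excess_L Ph \<mu> N (\<Sigma> N) = \<mu> - mm (P L N) N / N"
    proof -
      have "(\<Sum>n<N. measure_pmf.prob (vote_pmf Ph L (\<Sigma> N n)) {False}) = (\<Sum>n<N. 1 - pmf (P L N n) True)"
        by (simp add: measure_pmf_single pmf_False_conv_True P_def)
      also have "\<dots> = N - mm (P L N) N" by (simp add: sum_subtractf mm_def)
      finally show ?thesis using that by (simp add: excess_L_def field_simps)
    qed
    ultimately show ?thesis by (simp add: excess_def)
  qed
  have vv: "vote_var Ph w N (\<Sigma> N) = VV (P w N) N" for w N
    by (simp add: vote_var_def profile_pmf_def VS VV_def P_def)
  have pr: "0 \<le> prior L" "0 \<le> prior H" "prior L + prior H = 1" using prior_pos prior_sum by auto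
  have fid1: "fid N \<le> 1" for N
  proof -
    have "fid N \<le> prior L * 1 + prior H * 1" unfolding fid_eq
      using pr by (intro add_mono mult_left_mono) auto
    then show ?thesis using pr by simp
  qed
  have X0: "X 0 = 0" by (simp add: X_def zero_ereal_def)
  have part1: "(fid \<longlonglongrightarrow> 1)" if h: "liminf X = \<infinity>"
  proof (rule order_tendstoI)
    fix a :: real assume "1 < a" show "eventually (\<lambda>N. fid N < a) sequentially"
    proof -
      have "\<forall>N. fid N < a" using fid1 \<open>1 < a\<close> by (meson le_less_trans)
      then show ?thesis by simp
    qed
  next
    fix a :: real assume a1: "a < 1"
    define B where "B = max 1 (1 / (1 - a))"
    have B1: "1 \<le> B" by (simp add: B_def)
    have Ba: "1 / B \<le> 1 - a"
    proof -
      have "1 / (1 - a) \<le> B" by (simp add: B_def)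
      then show ?thesis using a1 B1 by (simp add: field_simps)
    qed
    have "eventually (\<lambda>N. ereal B < X N) sequentially"
      using h le_Liminf_iff[of "\<infinity>" sequentially X] by simp
    then show "eventually (\<lambda>N. a < fid N) sequentially"
    proof (rule eventually_mono)
      fix N assume "ereal B < X N"
      then have XB: "B < sqrt N * excess Ph \<mu> N (\<Sigma> N)" by (simp add: X_def)
      then have N0: "0 < N" using B1 by (cases N) auto
      define f where "f = excess Ph \<mu> N (\<Sigma> N)"
      have sN: "0 < sqrt N" using N0 by simp
      have "0 < sqrt N * f" using XB B1 unfolding f_def by linarith
      then have f0: "0 < f" using sN by (rule zero_less_mult_pos)
      have "B^2 < (sqrt N * f)^2" using XB B1 unfolding f_def by (intro power_strict_mono) auto
      then have NB: "B^2 < N * f^2" by (simp add: power_mult_distrib)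
      have ff: "f \<le> mm (P H N) N / N - \<mu>" "f \<le> \<mu> - mm (P L N) N / N"
        using exc[OF N0] unfolding f_def by auto
      have "1 - 1 / (4 * N * f^2) \<le> fid N"
        unfolding fid_eq by (rule Gi[OF N0 f0 ff pr])
      moreover have "1 / (4 * N * f^2) < 1 - a"
      proof -
        have "1 / (4 * N * f^2) \<le> 1 / (4 * B^2)"
          using NB B1 N0 by (intro divide_left_mono) (auto intro!: mult_pos_pos)
        also have "\<dots> < 1 / B"
        proof -
          have "B * 1 \<le> B * B" using B1 by (intro mult_left_mono) auto
          then have "B < 4 * B^2" using B1 by (simp add: power2_eq_square)
          then show ?thesis using B1 by (simp add: field_simps)
        qed
        finally show ?thesis using Ba by linarith
      qed
      ultimately show "a < fid N" by linarith
    qed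
  qed
  have part2: "\<not> (fid \<longlonglongrightarrow> 1)" if h: "liminf X < 0"
  proof
    assume lim: "fid \<longlonglongrightarrow> 1"
    have "\<not> (0 \<le> liminf X)" using h by simp
    then obtain y where y0: "y < 0" and ny: "\<not> eventually (\<lambda>N. y < X N) sequentially"
      unfolding le_Liminf_iff by auto
    have yfin: "y \<noteq> -\<infinity>" using ny by (auto simp: X_def)
    define c where "c = - real_of_ereal y"
    have yc: "y = ereal (- c)" using y0 yfin unfolding c_def by (cases y) auto
    have c0: "0 < c" using y0 yc by simp
    define g where "g = min (prior L) (prior H) * (4 * c^2 / (1 + 4 * c^2))"
    have g0: "0 < g" unfolding g_def using prior_pos c0 by (auto intro!: mult_pos_pos divide_pos_pos add_pos_nonneg)
    have ev: "eventually (\<lambda>N. 1 - g < fid N) sequentially"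
      using lim g0 by (intro order_tendstoD(1)) auto
    obtain N where N1: "1 - g < fid N" and N2: "\<not> y < X N" using ex_not[OF ev ny] by auto
    have XN: "sqrt N * excess Ph \<mu> N (\<Sigma> N) \<le> - c" using N2 yc by (simp add: X_def)
    have N0: "0 < N" using XN c0 by (cases N) auto
    have cs: "sqrt N * (mm (P H N) N / N - \<mu>) \<le> - c \<or> sqrt N * (\<mu> - mm (P L N) N / N) \<le> - c"
      using XN exc[OF N0] by (auto simp: min_def split: if_splits)
    have "fid N \<le> 1 - g" unfolding fid_eq g_def by (rule Gii[OF N0 c0 cs pr])
    then show False using N1 by linarith
  qed
  have part3: "\<not> (fid \<longlonglongrightarrow> 1)"
    if h0: "0 \<le> liminf X" and h1: "liminf X < \<infinity>" and h2: "\<exists>\<psi>>0. \<forall>N\<ge>1. \<forall>w. vote_var Ph w N (\<Sigma> N) \<ge> \<psi> * real N"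
  proof
    assume lim: "fid \<longlonglongrightarrow> 1"
    obtain ps where ps0: "0 < ps" and psV: "\<And>N w. 1 \<le> N \<Longrightarrow> ps * real N \<le> VV (P w N) N"
      using h2 vv by metis
    define K where "K = real_of_ereal (liminf X) + 1"
    have lK: "liminf X < ereal K" using h0 h1 unfolding K_def by (cases "liminf X") auto
    have K0: "0 < K" using h0 h1 unfolding K_def by (cases "liminf X") auto
    have nK: "\<not> eventually (\<lambda>N. ereal K \<le> X N) sequentially"
      using Liminf_bounded[where F=sequentially and C="ereal K" and X=X] lK by auto
    define bt where "bt = 5 * (K + 1) / ps + 1"
    have b1: "1 \<le> bt" using K0 ps0 by (simp add: bt_def)
    have bK: "bt * (K + 1) \<le> bt^2 * ps / 5"
    proof -
      have "K + 1 \<le> bt * ps / 5" using ps0 by (simp add: bt_def field_simps)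
      then have "bt * (K + 1) \<le> bt * (bt * ps / 5)" using b1 by (intro mult_left_mono) auto
      then show ?thesis by (simp add: power2_eq_square)
    qed
    define g where "g = min (prior L) (prior H) * (exp (- (bt^2)) / 4)"
    have g0: "0 < g" unfolding g_def using prior_pos by auto
    have ev: "eventually (\<lambda>N. 1 - g < fid N \<and> nat \<lceil>4 * bt^2\<rceil> + 1 \<le> N) sequentially"
      using lim g0 by (intro eventually_conj order_tendstoD(1) eventually_ge_at_top) auto
    obtain N where N1: "1 - g < fid N" and N3: "nat \<lceil>4 * bt^2\<rceil> + 1 \<le> N" and N2: "\<not> ereal K \<le> X N"
      using ex_not[OF ev nK] by auto
    have N0: "0 < N" using N3 by simp
    have Nb: "4 * bt^2 \<le> real N"
    proof -
      have "4 * bt^2 \<le> real (nat \<lceil>4 * bt^2\<rceil>)" by linarith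
      also have "\<dots> \<le> real N" using N3 by simp
      finally show ?thesis .
    qed
    have XN: "sqrt N * excess Ph \<mu> N (\<Sigma> N) < K" using N2 by (simp add: X_def)
    have cs: "sqrt N * (mm (P H N) N / N - \<mu>) < K \<or> sqrt N * (\<mu> - mm (P L N) N / N) < K"
      using XN exc[OF N0] by (auto simp: min_def split: if_splits)
    have VL: "ps * N \<le> VV (P L N) N" and VH: "ps * N \<le> VV (P H N) N" using psV N0 by auto
    have "fid N \<le> 1 - g" unfolding fid_eq g_def by (rule Giii[OF N0 Nb b1 bK VL VH cs pr])
    then show False using N1 by linarith
  qed
  show ?thesis
    using part1 part2 part3 unfolding X_def[symmetric] fid_def[symmetric] by blast
qed

end
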